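(* Let $\sigma$ be an $(\alpha,\beta)$-ReLU activation applied entrywise. For every $h\in\mathbb R^n$, $\mathrm{Dir}(\sigma(h))+\mathrm{Dir}(\sigma(-h))\le(\alpha^2+\beta^2)\,\mathrm{Dir}(h)$.
   Context: An activation $\sigma:\mathbb R\to\mathbb R$ is $(\alpha,\beta)$-ReLU if $\sigma(x)=\alpha x$ for $x\ge0$ and $\sigma(x)=\beta x$ for $x<0$, where $\alpha,\beta\ge0$ are not both $0$. Let $\mathcal G=(\mathcal V,\mathcal E)$ be a finite undirected graph with $n$ nodes, adjacency matrix $A$, degree matrix $D=\mathrm{diag}(A\mathbf 1_n)$ with degrees $d_i$, $\tilde A=A+I$, $\tilde D=D+I$, $\hat A=\tilde D^{-1/2}\tilde A\tilde D^{-1/2}$, $\hat L=I-\hat A$. For $x\in\mathbb R^n$, $\mathrm{Dir}(x)=x^\top\hat Lx=\sum_{\{i,j\}\in\mathcal E}(x_i/\sqrt{1+d_i}-x_j/\sqrt{1+d_j})^2$. *)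

theory Defs
  imports "HOL-Analysis.Analysis"
begin

definition relu_ab :: "real \<Rightarrow> real \<Rightarrow> real \<Rightarrow> real" where
  "relu_ab \<alpha> \<beta> x = (if x \<ge> 0 then \<alpha> * x else \<beta> * x)"

definition is_ab_relu :: "real \<Rightarrow> real \<Rightarrow> (real \<Rightarrow> real) \<Rightarrow> bool" where
  "is_ab_relu \<alpha> \<beta> \<sigma> \<longleftrightarrow> \<alpha> \<ge> 0 \<and> \<beta> \<ge> 0 \<and> \<not> (\<alpha> = 0 \<and> \<beta> = 0) \<and> \<sigma> = relu_ab \<alpha> \<beta>"

definition vmap :: "(real \<Rightarrow> real) \<Rightarrow> real^'n \<Rightarrow> real^'n" where
  "vmap \<sigma> x = (\<chi> i. \<sigma> (x $ i))"

definition is_adjacency :: "real^'n^'n \<Rightarrow> bool" where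
  "is_adjacency A \<longleftrightarrow> (\<forall>i j. A $ i $ j = A $ j $ i) \<and> (\<forall>i. A $ i $ i = 0)
     \<and> (\<forall>i j. A $ i $ j = 0 \<or> A $ i $ j = 1)"

definition degree :: "real^'n^'n \<Rightarrow> 'n \<Rightarrow> real" where
  "degree A i = (\<Sum>j\<in>UNIV. A $ i $ j)"

text \<open>\<hat>A = (D+I)^(-1/2) (A+I) (D+I)^(-1/2), and \<hat>L = I - \<hat>A.\<close>
definition norm_adj :: "real^'n^'n \<Rightarrow> real^'n^'n" where
  "norm_adj A = (\<chi> i j. (A $ i $ j + (if i = j then 1 else 0))
                   / (sqrt (1 + degree A i) * sqrt (1 + degree A j)))"

definition norm_lap :: "real^'n^'n \<Rightarrow> real^'n^'n" where
  "norm_lap A = mat 1 - norm_adj A"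

definition Dir :: "real^'n^'n \<Rightarrow> real^'n \<Rightarrow> real" where
  "Dir A x = x \<bullet> (norm_lap A *v x)"

end

theory Submission
  imports Defs
begin

lemma pair_ineq:
  fixes a b \<alpha> \<beta> :: real
  assumes "\<alpha> \<ge> 0" "\<beta> \<ge> 0"
  shows "(relu_ab \<alpha> \<beta> a - relu_ab \<alpha> \<beta> b)\<^sup>2 + (relu_ab \<alpha> \<beta> (-a) - relu_ab \<alpha> \<beta> (-b))\<^sup>2
         \<le> (\<alpha>\<^sup>2 + \<beta>\<^sup>2) * (a - b)\<^sup>2"
proof -
  have k: "0 \<le> - 2 * (a*b) * (\<alpha> - \<beta>)\<^sup>2" if "a * b \<le> 0"
    using that by (simp add: mult_nonpos_nonneg)
  show ?thesis
  proof (cases "a \<ge> 0"; cases "b \<ge> 0")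
    assume "a \<ge> 0" "b \<ge> 0" then show ?thesis
      by (cases "a = 0"; cases "b = 0") (auto simp: relu_ab_def power2_eq_square algebra_simps)
  next
    assume h: "a \<ge> 0" "\<not> b \<ge> 0"
    hence "a * b \<le> 0" by (simp add: mult_nonneg_nonpos)
    from k[OF this] h show ?thesis
      by (cases "a = 0") (auto simp: relu_ab_def power2_eq_square algebra_simps)
  next
    assume h: "\<not> a \<ge> 0" "b \<ge> 0"
    hence "a * b \<le> 0" by (simp add: mult_nonpos_nonneg)
    from k[OF this] h show ?thesis
      by (cases "b = 0") (auto simp: relu_ab_def power2_eq_square algebra_simps)
  next
    assume h: "\<not> a \<ge> 0" "\<not> b \<ge> 0"
    then show ?thesis by (auto simp: relu_ab_def power2_eq_square algebra_simps)
  qed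
qed

lemma relu_div:
  assumes "s > 0"
  shows "relu_ab \<alpha> \<beta> x / s = relu_ab \<alpha> \<beta> (x / s)"
  using assms by (auto simp: relu_ab_def divide_nonneg_pos)
    (metis divide_less_0_iff not_le)

lemma Dir_formula:
  fixes A :: "real^'n^'n" and x :: "real^'n"
  assumes adj: "is_adjacency A"
  defines "s \<equiv> \<lambda>i. sqrt (1 + degree A i)"
  shows "Dir A x = (1/2) * (\<Sum>i\<in>UNIV. \<Sum>j\<in>UNIV. A$i$j * (x$i / s i - x$j / s j)\<^sup>2)"
proof -
  define y where "y = (\<lambda>i. x$i / s i)"
  have dnn: "degree A i \<ge> 0" for i
    unfolding degree_def using adj unfolding is_adjacency_def
    by (intro sum_nonneg) (metis order_refl zero_le_one)
  have spos: "s i > 0" for i using dnn[of i] by (simp add: s_def)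
  have ssq: "s i * s i = 1 + degree A i" for i
    using dnn[of i] by (simp add: s_def)
  have xi: "x$i = y i * s i" for i using spos[of i] by (simp add: y_def)
  have row: "(\<Sum>j\<in>UNIV. x$i * (((if i = j then 1 else 0) - (A$i$j + (if i = j then 1 else 0)) / (s i * s j)) * x$j))
      = (\<Sum>j\<in>UNIV. A$i$j * (y i * y i - y i * y j))" for i
  proof -
    have "(\<Sum>j\<in>UNIV. x$i * (((if i = j then 1 else 0) - (A$i$j + (if i = j then 1 else 0)) / (s i * s j)) * x$j))
       = (\<Sum>j\<in>UNIV. (if i = j then x$i * x$i - x$i * x$i / (s i * s i) else 0) - A$i$j * (y i * y j))"
      apply (rule sum.cong[OF refl])
      subgoal for j using spos[of i] spos[of j] by (auto simp: xi field_simps)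
      done
    also have "\<dots> = x$i * x$i - x$i * x$i / (s i * s i) - (\<Sum>j\<in>UNIV. A$i$j * (y i * y j))"
      by (simp add: sum_subtractf)
    also have "x$i * x$i - x$i * x$i / (s i * s i) = degree A i * (y i * y i)"
    proof -
      have e2: "x$i * x$i / (s i * s i) = y i * y i" using spos[of i] by (simp add: xi)
      have e1: "x$i * x$i = (1 + degree A i) * (y i * y i)"
        by (simp add: xi ssq[symmetric] algebra_simps)
      show ?thesis by (simp only: e2) (simp add: e1 algebra_simps)
    qed
    also have "degree A i * (y i * y i) = (\<Sum>j\<in>UNIV. A$i$j * (y i * y i))"
      by (simp add: degree_def sum_distrib_right)
    finally show ?thesis by (simp add: sum_subtractf right_diff_distrib)
  qed
  have "Dir A x = (\<Sum>i\<in>UNIV. \<Sum>j\<in>UNIV. x$i * (((if i = j then 1 else 0) - (A$i$j + (if i = j then 1 else 0)) / (s i * s j)) * x$j))"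
    unfolding Dir_def norm_lap_def norm_adj_def inner_vec_def matrix_vector_mult_def
    by (simp add: mat_def sum_distrib_left s_def mult.assoc)
  also have "\<dots> = (\<Sum>i\<in>UNIV. \<Sum>j\<in>UNIV. A$i$j * (y i * y i - y i * y j))"
    using row by simp
  also have "\<dots> = (1/2) * (\<Sum>i\<in>UNIV. \<Sum>j\<in>UNIV. A$i$j * (y i - y j)\<^sup>2)"
  proof -
    have sym: "A$i$j = A$j$i" for i j using adj by (simp add: is_adjacency_def)
    have sw: "(\<Sum>i\<in>UNIV. \<Sum>j\<in>UNIV. A$i$j * (y j * y j)) = (\<Sum>i\<in>UNIV. \<Sum>j\<in>UNIV. A$i$j * (y i * y i))"
      by (subst sum.swap) (simp add: sym)
    have "(\<Sum>i\<in>UNIV. \<Sum>j\<in>UNIV. A$i$j * (y i - y j)\<^sup>2)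
       = (\<Sum>i\<in>UNIV. \<Sum>j\<in>UNIV. A$i$j * (y i * y i)) + (\<Sum>i\<in>UNIV. \<Sum>j\<in>UNIV. A$i$j * (y j * y j))
         - 2 * (\<Sum>i\<in>UNIV. \<Sum>j\<in>UNIV. A$i$j * (y i * y j))"
      by (simp add: power2_eq_square algebra_simps sum.distrib sum_subtractf sum_distrib_left)
    moreover have "(\<Sum>i\<in>UNIV. \<Sum>j\<in>UNIV. A$i$j * (y i * y i - y i * y j))
       = (\<Sum>i\<in>UNIV. \<Sum>j\<in>UNIV. A$i$j * (y i * y i)) - (\<Sum>i\<in>UNIV. \<Sum>j\<in>UNIV. A$i$j * (y i * y j))"
      by (simp add: right_diff_distrib sum_subtractf)
    ultimately show ?thesis using sw by simp
  qed
  finally show ?thesis by (simp add: y_def)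
qed

theorem mainTheorem12:
  fixes A :: "real^'n^'n" and \<sigma> :: "real \<Rightarrow> real" and \<alpha> \<beta> :: real and h :: "real^'n"
  assumes "is_adjacency A"
    and "is_ab_relu \<alpha> \<beta> \<sigma>"
  shows "Dir A (vmap \<sigma> h) + Dir A (vmap \<sigma> (- h)) \<le> (\<alpha>\<^sup>2 + \<beta>\<^sup>2) * Dir A h"
proof -
  define s where "s = (\<lambda>i. sqrt (1 + degree A i))"
  have ab: "\<alpha> \<ge> 0" "\<beta> \<ge> 0" and sg: "\<sigma> = relu_ab \<alpha> \<beta>" using assms(2) by (auto simp: is_ab_relu_def)
  have dnn: "degree A i \<ge> 0" for i
    unfolding degree_def using assms(1) unfolding is_adjacency_def
    by (intro sum_nonneg) (metis order_refl zero_le_one)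
  have spos: "s i > 0" for i using dnn[of i] by (simp add: s_def)
  have Anng: "A$i$j \<ge> 0" for i j using assms(1) unfolding is_adjacency_def
    by (metis order_refl zero_le_one)
  let ?r = "relu_ab \<alpha> \<beta>"
  have rd: "?r x / sqrt (1 + degree A i) = ?r (x / sqrt (1 + degree A i))" for x i
    using relu_div[OF spos[of i]] by (simp add: s_def)
  have "Dir A (vmap \<sigma> h) + Dir A (vmap \<sigma> (- h))
      = (1/2) * (\<Sum>i\<in>UNIV. \<Sum>j\<in>UNIV. A$i$j * ((?r (h$i / s i) - ?r (h$j / s j))\<^sup>2
            + (?r (-(h$i / s i)) - ?r (-(h$j / s j)))\<^sup>2))"
    using rd unfolding Dir_formula[OF assms(1)]
    by (simp add: vmap_def sg s_def sum.distrib distrib_left)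
  also have "\<dots> \<le> (1/2) * (\<Sum>i\<in>UNIV. \<Sum>j\<in>UNIV. A$i$j * ((\<alpha>\<^sup>2 + \<beta>\<^sup>2) * (h$i / s i - h$j / s j)\<^sup>2))"
    by (intro mult_left_mono sum_mono mult_left_mono[OF pair_ineq[OF ab]] Anng) auto
  also have "\<dots> = (\<alpha>\<^sup>2 + \<beta>\<^sup>2) * Dir A h"
    unfolding Dir_formula[OF assms(1)]
    by (simp add: s_def sum_distrib_left algebra_simps add_divide_distrib)
  finally show ?thesis .
qed

end
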